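(* Let $(D,\Sigma)$ be a tropical linear series of rank $r$ on a metric graph $\Gamma$, and let $M$ be its local array at a point $v$ of valence $d\ge2$ (with tangent vectors ordered $\eta_1,\dots,\eta_d$). Then $M$ satisfies (P2'): for any distinct $i,j\in\{1,\dots,d\}$ and every pair of integers $r_i,r_j\ge0$ with $r_i+r_j=r$, there exist $\mathbf z,\mathbf w_1,\dots,\mathbf w_{r_i},\mathbf u_1,\dots,\mathbf u_{r_j}\in M$ such that (a) $w_{1,i}<w_{2,i}<\dots<w_{r_i,i}<z_i$; (b) $u_{1,j}<u_{2,j}<\dots<u_{r_j,j}<z_j$; (c) $u_{k,j}<w_{k',j}$ for all $1\le k\le r_j$ and $1\le k'\le r_i$. Here $w_{k,i}$ denotes the $i$-th coordinate of $\mathbf w_k$, and similarly for the others.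
   Context: A metric graph is obtained from a finite connected graph by identifying each edge with a closed interval of positive length. $T_v(\Gamma)$ is the set of outgoing tangent directions and the valence is $|T_v(\Gamma)|$. $\mathrm{sl}_\eta(f)$ is the outgoing slope of a continuous piecewise linear integer-slope function. We set $\mathrm{div}(f)=\sum_v(-\sum_{\eta\in T_v}\mathrm{sl}_\eta(f))v$ and $R(D)=\{f:D+\mathrm{div}(f)\ge0\}$ for a divisor $D$. A tropical linear series of rank $r$ is $(D,\Sigma)$ with $\Sigma\subseteq R(D)$ a finitely generated tropical submodule (closed under $\min\{f_i+a_i\}$, $a_i\in\mathbb R$) such that: (1) every effective divisor $E$ of degree $r$ admits $f\in\Sigma$ with $\mathrm{div}(f)+D\ge E$; (2) every $r+2$ functions of $\Sigma$ are tropically dependent (some $\min_i(f_i+a_i)$ is attained at least twice at every point). For such a series every slope set $\{\mathrm{sl}_\eta(f):f\in\Sigma\}$ has exactly $r+1$ elements $s_\eta[0]<\dots<s_\eta[r]$. The local array at $v$ is $M=\{\mathbf x\in[r]^d:\exists f\in\Sigma,\ \mathrm{sl}_{\eta_i}(f)=s_{\eta_i}[x_i]\ \forall i\}$, where $[r]=\{0,\dots,r\}$. *)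

theory Defs
  imports Complex_Main
begin

text \<open>Edge e is identified with the closed interval
[0, elen e], parameter 0 being src e and parameter elen e being tgt e.\<close>

record ('v,'e) mgraph =
  verts :: "'v set"
  edges :: "'e set"
  src   :: "'e \<Rightarrow> 'v"
  tgt   :: "'e \<Rightarrow> 'v"
  elen  :: "'e \<Rightarrow> real"

definition metric_graph :: "('v,'e) mgraph \<Rightarrow> bool" where
  "metric_graph G \<longleftrightarrow>
     finite (verts G) \<and> verts G \<noteq> {} \<and> finite (edges G) \<and>
     (\<forall>e\<in>edges G. src G e \<in> verts G \<and> tgt G e \<in> verts G \<and> elen G e > 0) \<and>
     (\<forall>x\<in>verts G. \<forall>y\<in>verts G.
        (x, y) \<in> ({(src G e, tgt G e) | e. e \<in> edges G} \<union>
                  {(tgt G e, src G e) | e. e \<in> edges G})\<^sup>*)"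

datatype ('v,'e) point = Vert 'v | Inner 'e real

definition points :: "('v,'e) mgraph \<Rightarrow> ('v,'e) point set" where
  "points G = Vert ` verts G \<union> {Inner e t | e t. e \<in> edges G \<and> 0 < t \<and> t < elen G e}"

text \<open>Outgoing tangent directions: (e, True) points along e in the direction of
increasing parameter, (e, False) in the direction of decreasing parameter.
A loop at v contributes two tangent directions at v.\<close>

definition tangents :: "('v,'e) mgraph \<Rightarrow> ('v,'e) point \<Rightarrow> ('e \<times> bool) set" where
  "tangents G p = (case p of
      Vert v \<Rightarrow> {(e, True) | e. e \<in> edges G \<and> src G e = v}
              \<union> {(e, False) | e. e \<in> edges G \<and> tgt G e = v}
    | Inner e t \<Rightarrow> {(e, True), (e, False)})"

definition valence :: "('v,'e) mgraph \<Rightarrow> ('v,'e) point \<Rightarrow> nat" where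
  "valence G p = card (tangents G p)"

definition coord :: "('v,'e) mgraph \<Rightarrow> ('v,'e) point \<Rightarrow> 'e \<times> bool \<Rightarrow> real" where
  "coord G p \<eta> = (case p of Vert v \<Rightarrow> (if snd \<eta> then 0 else elen G (fst \<eta>))
                          | Inner e t \<Rightarrow> t)"

definition edge_fun :: "('v,'e) mgraph \<Rightarrow> (('v,'e) point \<Rightarrow> real) \<Rightarrow> 'e \<Rightarrow> real \<Rightarrow> real" where
  "edge_fun G f e t =
     (if t = 0 then f (Vert (src G e))
      else if t = elen G e then f (Vert (tgt G e))
      else f (Inner e t))"

definition pl_int_on :: "real \<Rightarrow> (real \<Rightarrow> real) \<Rightarrow> bool" where
  "pl_int_on L g \<longleftrightarrow>
     (\<exists>ts :: real list. length ts \<ge> 2 \<and> sorted_wrt (<) ts \<and> hd ts = 0 \<and> last ts = L \<and>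
        (\<forall>k. Suc k < length ts \<longrightarrow>
           (\<exists>m :: int. \<forall>t. ts ! k \<le> t \<and> t \<le> ts ! Suc k \<longrightarrow>
                g t = g (ts ! k) + of_int m * (t - ts ! k))))"

definition PL :: "('v,'e) mgraph \<Rightarrow> (('v,'e) point \<Rightarrow> real) \<Rightarrow> bool" where
  "PL G f \<longleftrightarrow> (\<forall>e\<in>edges G. pl_int_on (elen G e) (edge_fun G f e))"

definition slope :: "('v,'e) mgraph \<Rightarrow> (('v,'e) point \<Rightarrow> real) \<Rightarrow> ('v,'e) point \<Rightarrow> 'e \<times> bool \<Rightarrow> real" where
  "slope G f p \<eta> =
     Lim (at_right 0) (\<lambda>h. (edge_fun G f (fst \<eta>) (coord G p \<eta> + (if snd \<eta> then h else - h))
                             - edge_fun G f (fst \<eta>) (coord G p \<eta>)) / h)"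

definition divf :: "('v,'e) mgraph \<Rightarrow> (('v,'e) point \<Rightarrow> real) \<Rightarrow> ('v,'e) point \<Rightarrow> real" where
  "divf G f p = - (\<Sum>\<eta>\<in>tangents G p. slope G f p \<eta>)"

definition divisor :: "('v,'e) mgraph \<Rightarrow> (('v,'e) point \<Rightarrow> int) \<Rightarrow> bool" where
  "divisor G D \<longleftrightarrow> finite {p. D p \<noteq> 0} \<and> {p. D p \<noteq> 0} \<subseteq> points G"

definition deg :: "(('v,'e) point \<Rightarrow> int) \<Rightarrow> int" where
  "deg D = (\<Sum>p\<in>{p. D p \<noteq> 0}. D p)"

definition effective_divisor :: "('v,'e) mgraph \<Rightarrow> (('v,'e) point \<Rightarrow> int) \<Rightarrow> bool" where
  "effective_divisor G E \<longleftrightarrow> divisor G E \<and> (\<forall>p. E p \<ge> 0)"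

definition RD :: "('v,'e) mgraph \<Rightarrow> (('v,'e) point \<Rightarrow> int) \<Rightarrow> (('v,'e) point \<Rightarrow> real) set" where
  "RD G D = {f. PL G f \<and> (\<forall>p\<in>points G. real_of_int (D p) + divf G f p \<ge> 0)}"

definition trop_comb :: "nat \<Rightarrow> (nat \<Rightarrow> ('p \<Rightarrow> real)) \<Rightarrow> (nat \<Rightarrow> real) \<Rightarrow> 'p \<Rightarrow> real" where
  "trop_comb n fs a p = Min ((\<lambda>i. fs i p + a i) ` {..<n})"

definition trop_submodule :: "('v,'e) mgraph \<Rightarrow> (('v,'e) point \<Rightarrow> real) set \<Rightarrow> bool" where
  "trop_submodule G \<Sigma> \<longleftrightarrow>
     (\<forall>n fs a. n > 0 \<and> (\<forall>i<n. fs i \<in> \<Sigma>) \<longrightarrow>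
        (\<exists>h\<in>\<Sigma>. \<forall>p\<in>points G. h p = trop_comb n fs a p))"

definition finitely_generated :: "('v,'e) mgraph \<Rightarrow> (('v,'e) point \<Rightarrow> real) set \<Rightarrow> bool" where
  "finitely_generated G \<Sigma> \<longleftrightarrow>
     (\<exists>Gs. finite Gs \<and> Gs \<subseteq> \<Sigma> \<and>
        (\<forall>f\<in>\<Sigma>. \<exists>n fs a. n > 0 \<and> (\<forall>i<n. fs i \<in> Gs) \<and>
                  (\<forall>p\<in>points G. f p = trop_comb n fs a p)))"

definition trop_dependent :: "('v,'e) mgraph \<Rightarrow> nat \<Rightarrow> (nat \<Rightarrow> (('v,'e) point \<Rightarrow> real)) \<Rightarrow> bool" where
  "trop_dependent G n fs \<longleftrightarrow>
     (\<exists>a :: nat \<Rightarrow> real. \<forall>p\<in>points G. \<exists>i1<n. \<exists>i2<n. i1 \<noteq> i2 \<and>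
        fs i1 p + a i1 = trop_comb n fs a p \<and> fs i2 p + a i2 = trop_comb n fs a p)"

definition trop_lin_series ::
  "('v,'e) mgraph \<Rightarrow> nat \<Rightarrow> (('v,'e) point \<Rightarrow> int) \<Rightarrow> (('v,'e) point \<Rightarrow> real) set \<Rightarrow> bool" where
  "trop_lin_series G r D \<Sigma> \<longleftrightarrow>
     divisor G D \<and> \<Sigma> \<subseteq> RD G D \<and> trop_submodule G \<Sigma> \<and> finitely_generated G \<Sigma> \<and>
     (\<forall>E. effective_divisor G E \<and> deg E = int r \<longrightarrow>
        (\<exists>f\<in>\<Sigma>. \<forall>p\<in>points G. real_of_int (D p) + divf G f p \<ge> real_of_int (E p))) \<and>
     (\<forall>fs. (\<forall>i<r+2. fs i \<in> \<Sigma>) \<longrightarrow> trop_dependent G (r+2) fs)"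

definition slope_set :: "('v,'e) mgraph \<Rightarrow> (('v,'e) point \<Rightarrow> real) set \<Rightarrow> ('v,'e) point \<Rightarrow> 'e \<times> bool \<Rightarrow> real set" where
  "slope_set G \<Sigma> p \<eta> = {slope G f p \<eta> | f. f \<in> \<Sigma>}"

definition sl_idx :: "('v,'e) mgraph \<Rightarrow> (('v,'e) point \<Rightarrow> real) set \<Rightarrow> ('v,'e) point \<Rightarrow> 'e \<times> bool \<Rightarrow> nat \<Rightarrow> real" where
  "sl_idx G \<Sigma> p \<eta> k = sorted_list_of_set (slope_set G \<Sigma> p \<eta>) ! k"

text \<open>Local array at p with respect to an ordering \<eta>_0, ..., \<eta>_{d-1} of the
tangent directions (0-based indices); vectors are x :: nat \<Rightarrow> nat with x i = 0
for i \<ge> d, and entries in [r] = {0..r}.\<close>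

definition local_array ::
  "('v,'e) mgraph \<Rightarrow> nat \<Rightarrow> (('v,'e) point \<Rightarrow> real) set \<Rightarrow> ('v,'e) point \<Rightarrow> (nat \<Rightarrow> 'e \<times> bool) \<Rightarrow> (nat \<Rightarrow> nat) set" where
  "local_array G r \<Sigma> p eta =
     {x. (\<forall>i<valence G p. x i \<le> r) \<and> (\<forall>i\<ge>valence G p. x i = 0) \<and>
         (\<exists>f\<in>\<Sigma>. \<forall>i<valence G p. slope G f p (eta i) = sl_idx G \<Sigma> p (eta i) (x i))}"

end

theory Submission
  imports Defs
begin


lemma finite_small:
  assumes "finite X" "\<forall>x\<in>X. \<exists>e>0. P x (e::real)"
    "\<And>x e e'. P x e \<Longrightarrow> 0 < e' \<Longrightarrow> e' \<le> e \<Longrightarrow> P x e'"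
  shows "\<exists>e>0. \<forall>x\<in>X. P x e"
  using assms(1,2)
proof (induction X rule: finite_induct)
  case empty then show ?case by (auto intro: exI[of _ 1])
next
  case (insert x F)
  then obtain e1 where e1: "e1 > 0" "P x e1" by auto
  from insert obtain e2 where e2: "e2 > 0" "\<forall>y\<in>F. P y e2" by auto
  show ?case
    apply (rule exI[of _ "min e1 e2"])
    using e1 e2 assms(3) by auto
qed

lemma Lim_ev:
  assumes "eventually (\<lambda>h. q h = c) (at_right (0::real))"
  shows "Lim (at_right 0) q = c"
  by (rule tendsto_Lim) (auto intro: tendsto_eventually[OF assms])

definition lmin :: "nat \<Rightarrow> (nat \<Rightarrow> real) \<Rightarrow> (nat \<Rightarrow> real) \<Rightarrow> real \<Rightarrow> real" where
  "lmin n C s x = Min ((\<lambda>i. C i + s i * x) ` {..<n})"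

definition act :: "nat \<Rightarrow> (nat \<Rightarrow> real) \<Rightarrow> (nat \<Rightarrow> real) \<Rightarrow> real \<Rightarrow> nat set" where
  "act n C s t = {i. i < n \<and> C i + s i * t = lmin n C s t}"

lemma lmin_le: "i < n \<Longrightarrow> lmin n C s x \<le> C i + s i * x"
  unfolding lmin_def by (rule Min_le) auto

lemma lmin_in: "n > 0 \<Longrightarrow> \<exists>i<n. lmin n C s x = C i + s i * x"
proof -
  assume "n > 0"
  then have "lmin n C s x \<in> (\<lambda>i. C i + s i * x) ` {..<n}"
    unfolding lmin_def by (intro Min_in) auto
  then show ?thesis by auto
qed

lemma act_ne: "n > 0 \<Longrightarrow> act n C s t \<noteq> {}"
  using lmin_in[of n C s t] unfolding act_def by (auto simp: eq_commute)

lemma act_chain: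
  assumes "a \<in> act n C s t" "b \<in> act n C s t'" "t < t'"
  shows "s b \<le> s a"
proof -
  have 1: "C b + s b * t' \<le> C a + s a * t'" using assms lmin_le[of a n C s t'] unfolding act_def by auto
  have 2: "C a + s a * t \<le> C b + s b * t" using assms lmin_le[of b n C s t] unfolding act_def by auto
  have "(s b - s a) * (t' - t) \<le> 0" using 1 2 by (simp add: algebra_simps)
  then show ?thesis using assms(3) by (simp add: mult_le_0_iff)
qed

lemma lines_local:
  assumes "n > 0"
  shows "\<exists>d>0. \<forall>x. \<bar>x - t\<bar> < d \<longrightarrow> lmin n C s x = Min ((\<lambda>i. C i + s i * x) ` act n C s t)"
proof -
  obtain a0 where a0: "a0 \<in> act n C s t" using act_ne[OF assms] by blast
  have "\<exists>d>0. \<forall>i\<in>{i. i<n \<and> i \<notin> act n C s t}. \<forall>x. \<bar>x - t\<bar> < d \<longrightarrow> C a0 + s a0 * x < C i + s i * x"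
  proof (rule finite_small)
    show "\<forall>i\<in>{i. i<n \<and> i \<notin> act n C s t}. \<exists>d>0. \<forall>x. \<bar>x - t\<bar> < d \<longrightarrow> C a0 + s a0 * x < C i + s i * x"
    proof
      fix i assume i: "i \<in> {i. i<n \<and> i \<notin> act n C s t}"
      define g where "g = C i + s i * t - (C a0 + s a0 * t)"
      have "g > 0" using i a0 lmin_le[of i n C s t] unfolding act_def g_def by auto
      define d where "d = g / (\<bar>s i - s a0\<bar> + 1)"
      have dpos: "d > 0" using \<open>g>0\<close> unfolding d_def by auto
      show "\<exists>d>0. \<forall>x. \<bar>x - t\<bar> < d \<longrightarrow> C a0 + s a0 * x < C i + s i * x"
      proof (intro exI[of _ d] conjI allI impI dpos)
        fix x assume x: "\<bar>x - t\<bar> < d"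
        have "\<bar>(s i - s a0) * (x - t)\<bar> \<le> (\<bar>s i - s a0\<bar> + 1) * \<bar>x - t\<bar>"
          by (simp add: abs_mult mult_right_mono)
        also have "\<dots> < (\<bar>s i - s a0\<bar> + 1) * d"
          using x by (intro mult_strict_left_mono) auto
        also have "\<dots> = g" unfolding d_def by auto
        finally have "\<bar>(s i - s a0) * (x - t)\<bar> < g" .
        then have "- g < (s i - s a0) * (x - t)" by linarith
        then show "C a0 + s a0 * x < C i + s i * x" unfolding g_def by (simp add: algebra_simps)
      qed
    qed
  qed auto
  then obtain d where d: "d > 0" "\<forall>i. i<n \<and> i \<notin> act n C s t \<longrightarrow> (\<forall>x. \<bar>x - t\<bar> < d \<longrightarrow> C a0 + s a0 * x < C i + s i * x)"
    by auto
  show ?thesis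
  proof (intro exI[of _ d] conjI allI impI d(1))
    fix x assume x: "\<bar>x - t\<bar> < d"
    have fin: "finite (act n C s t)" unfolding act_def by auto
    have sub: "act n C s t \<subseteq> {..<n}" unfolding act_def by auto
    have le1: "lmin n C s x \<le> Min ((\<lambda>i. C i + s i * x) ` act n C s t)"
      unfolding lmin_def using a0 sub by (intro Min_antimono) auto
    obtain k where k: "k < n" "lmin n C s x = C k + s k * x" using lmin_in[OF assms] by blast
    have "Min ((\<lambda>i. C i + s i * x) ` act n C s t) \<le> lmin n C s x"
    proof (cases "k \<in> act n C s t")
      case True then show ?thesis using k fin by (simp add: Min_le)
    next
      case False
      then have "C a0 + s a0 * x < C k + s k * x" using d(2) k x by auto
      moreover have "Min ((\<lambda>i. C i + s i * x) ` act n C s t) \<le> C a0 + s a0 * x" using a0 fin by (simp add: Min_le)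
      ultimately show ?thesis using k by linarith
    qed
    then show "lmin n C s x = Min ((\<lambda>i. C i + s i * x) ` act n C s t)" using le1 by linarith
  qed
qed




definition idx :: "real set \<Rightarrow> real \<Rightarrow> nat" where
  "idx S s = card {y\<in>S. y < s}"

lemma idx_nth:
  assumes "finite S" "k < card S"
  shows "idx S (sorted_list_of_set S ! k) = k"
proof -
  define L where "L = sorted_list_of_set S"
  have sL: "set L = S" "length L = card S" "sorted_wrt (<) L" "distinct L"
    using assms unfolding L_def by simp_all
  have "{y\<in>S. y < L ! k} = (\<lambda>l. L ! l) ` {..<k}"
  proof
    show "{y\<in>S. y < L ! k} \<subseteq> (\<lambda>l. L ! l) ` {..<k}"
    proof
      fix y assume y: "y \<in> {y\<in>S. y < L ! k}"
      then obtain l where l: "l < length L" "L ! l = y" using sL by (auto simp: in_set_conv_nth)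
      have "l < k"
      proof (rule ccontr)
        assume "\<not> l < k"
        then have "k = l \<or> k < l" by linarith
        then have "L ! k \<le> L ! l"
        proof
          assume "k < l" then show ?thesis using sorted_wrt_nth_less[OF sL(3) \<open>k < l\<close> l(1)] by simp
        qed simp
        then show False using y l by auto
      qed
      then show "y \<in> (\<lambda>l. L ! l) ` {..<k}" using l by auto
    qed
  next
    show "(\<lambda>l. L ! l) ` {..<k} \<subseteq> {y\<in>S. y < L ! k}"
    proof
      fix y assume "y \<in> (\<lambda>l. L ! l) ` {..<k}"
      then obtain l where l: "l < k" "y = L ! l" by auto
      have "L ! l \<in> S" using l sL assms(2) by (metis nth_mem order.strict_trans)
      moreover have "L ! l < L ! k" using sorted_wrt_nth_less[OF sL(3) l(1)] sL assms(2) by simp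
      ultimately show "y \<in> {y\<in>S. y < L ! k}" using l by simp
    qed
  qed
  moreover have "inj_on (\<lambda>l. L ! l) {..<k}"
    using sL assms(2) unfolding inj_on_def by (simp add: nth_eq_iff_index_eq)
  ultimately show ?thesis unfolding idx_def L_def[symmetric] by (simp add: card_image)
qed


lemma nth_idx:
  assumes "finite S" "s \<in> S"
  shows "sorted_list_of_set S ! (idx S s) = s" "idx S s < card S"
proof -
  have "s \<in> set (sorted_list_of_set S)" using assms by simp
  then obtain k where k0: "k < length (sorted_list_of_set S)" "sorted_list_of_set S ! k = s"
    unfolding in_set_conv_nth by blast
  have k: "k < card S" using k0 assms by simp
  show "sorted_list_of_set S ! (idx S s) = s" "idx S s < card S" using idx_nth[OF assms(1) k] k k0 by auto
qed

lemma idx_mono_less: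
  assumes "finite S" "s \<in> S" "s < s'"
  shows "idx S s < idx S s'"
proof -
  have "{y\<in>S. y < s} \<subseteq> {y\<in>S. y < s'}" using assms by auto
  moreover have "s \<in> {y\<in>S. y < s'}" "s \<notin> {y\<in>S. y < s}" using assms by auto
  ultimately have "{y\<in>S. y < s} \<subset> {y\<in>S. y < s'}" by blast
  moreover have "finite {y\<in>S. y < s'}" using assms by simp
  ultimately show ?thesis unfolding idx_def by (rule psubset_card_mono[rotated])
qed

lemma idx_mono:
  assumes "finite S" "s \<le> s'"
  shows "idx S s \<le> idx S s'"
proof -
  have "{y\<in>S. y < s} \<subseteq> {y\<in>S. y < s'}" using assms by force
  moreover have "finite {y\<in>S. y < s'}" using assms by simp
  ultimately show ?thesis unfolding idx_def by (rule card_mono[rotated])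
qed

lemma idx_ge:
  assumes "finite S" "B \<subseteq> S" "\<forall>y\<in>B. y < s"
  shows "card B \<le> idx S s"
proof -
  have "B \<subseteq> {y\<in>S. y < s}" using assms by blast
  moreover have "finite {y\<in>S. y < s}" using assms by simp
  ultimately show ?thesis unfolding idx_def by (rule card_mono[rotated])
qed



lemma pl_right:
  assumes "pl_int_on L g" "0 \<le> c" "c < L"
  shows "\<exists>e>0. \<exists>m::int. \<forall>x. c \<le> x \<and> x \<le> c + e \<longrightarrow> g x = g c + of_int m * (x - c)"
proof -
  obtain ts :: "real list" where ts: "length ts \<ge> 2" "hd ts = 0" "last ts = L"
    "\<forall>k. Suc k < length ts \<longrightarrow> (\<exists>m :: int. \<forall>t. ts ! k \<le> t \<and> t \<le> ts ! Suc k \<longrightarrow>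
                g t = g (ts ! k) + of_int m * (t - ts ! k))"
    using assms(1) unfolding pl_int_on_def by blast
  define K where "K = {k. k < length ts \<and> ts ! k \<le> c}"
  have h0: "ts ! 0 = 0" using ts by (cases ts) auto
  have "ts \<noteq> []" using ts by auto
  then have hl: "ts ! (length ts - 1) = L" using ts by (metis last_conv_nth)
  have "0 \<in> K" unfolding K_def using ts h0 assms by auto
  have finK: "finite K" unfolding K_def by auto
  define k where "k = Max K"
  have kK: "k \<in> K" unfolding k_def using finK \<open>0\<in>K\<close> by (intro Max_in) auto
  have "k \<noteq> length ts - 1" using kK hl assms unfolding K_def by auto
  then have k1: "Suc k < length ts" using kK unfolding K_def by auto
  have "Suc k \<notin> K" using Max_ge[OF finK, of "Suc k"] unfolding k_def by auto
  then have ck: "c < ts ! Suc k" using k1 unfolding K_def by auto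
  obtain m :: int where m: "\<forall>t. ts ! k \<le> t \<and> t \<le> ts ! Suc k \<longrightarrow> g t = g (ts ! k) + of_int m * (t - ts ! k)"
    using ts(4) k1 by blast
  have kc: "ts ! k \<le> c" using kK unfolding K_def by auto
  show ?thesis
  proof (intro exI[of _ "ts ! Suc k - c"] conjI exI[of _ m] allI impI)
    show "ts ! Suc k - c > 0" using ck by auto
    fix x assume x: "c \<le> x \<and> x \<le> c + (ts ! Suc k - c)"
    have "g x = g (ts ! k) + of_int m * (x - ts ! k)" using x kc by (intro m[rule_format]) auto
    moreover have "g c = g (ts ! k) + of_int m * (c - ts ! k)" using kc ck by (intro m[rule_format]) auto
    ultimately show "g x = g c + of_int m * (x - c)" by (simp add: algebra_simps)
  qed
qed

lemma pl_left:
  assumes "pl_int_on L g" "0 < c" "c \<le> L"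
  shows "\<exists>e>0. \<exists>m::int. \<forall>x. c - e \<le> x \<and> x \<le> c \<longrightarrow> g x = g c + of_int m * (x - c)"
proof -
  obtain ts :: "real list" where ts: "length ts \<ge> 2" "hd ts = 0" "last ts = L"
    "\<forall>k. Suc k < length ts \<longrightarrow> (\<exists>m :: int. \<forall>t. ts ! k \<le> t \<and> t \<le> ts ! Suc k \<longrightarrow>
                g t = g (ts ! k) + of_int m * (t - ts ! k))"
    using assms(1) unfolding pl_int_on_def by blast
  define K where "K = {k. k < length ts \<and> c \<le> ts ! k}"
  have h0: "ts ! 0 = 0" using ts by (cases ts) auto
  have "ts \<noteq> []" using ts by auto
  then have hl: "ts ! (length ts - 1) = L" using ts by (metis last_conv_nth)
  have "length ts - 1 \<in> K" unfolding K_def using ts hl assms by auto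
  have finK: "finite K" unfolding K_def by auto
  define k where "k = Min K"
  have kK: "k \<in> K" unfolding k_def using finK \<open>length ts - 1\<in>K\<close> by (intro Min_in) auto
  have "k \<noteq> 0"
  proof
    assume "k = 0" then show False using kK h0 assms unfolding K_def by auto
  qed
  then obtain k0 where k0: "k = Suc k0" by (cases k) auto
  have k1: "Suc k0 < length ts" using kK k0 unfolding K_def by auto
  have "k0 \<notin> K"
  proof
    assume "k0 \<in> K" then have "Min K \<le> k0" using Min_le[OF finK] by blast
    then show False using k0 unfolding k_def by simp
  qed
  then have ck: "ts ! k0 < c" using k1 unfolding K_def by auto
  obtain m :: int where m: "\<forall>t. ts ! k0 \<le> t \<and> t \<le> ts ! Suc k0 \<longrightarrow> g t = g (ts ! k0) + of_int m * (t - ts ! k0)"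
    using ts(4) k1 by blast
  have kc: "c \<le> ts ! Suc k0" using kK k0 unfolding K_def by auto
  show ?thesis
  proof (intro exI[of _ "c - ts ! k0"] conjI exI[of _ m] allI impI)
    show "c - ts ! k0 > 0" using ck by auto
    fix x assume x: "c - (c - ts ! k0) \<le> x \<and> x \<le> c"
    have "g x = g (ts ! k0) + of_int m * (x - ts ! k0)" using x kc by (intro m[rule_format]) auto
    moreover have "g c = g (ts ! k0) + of_int m * (c - ts ! k0)" using kc ck by (intro m[rule_format]) auto
    ultimately show "g x = g c + of_int m * (x - c)" by (simp add: algebra_simps)
  qed
qed




definition ph :: "('v,'e) mgraph \<Rightarrow> ('v,'e) point \<Rightarrow> 'e \<times> bool \<Rightarrow> (('v,'e) point \<Rightarrow> real) \<Rightarrow> real \<Rightarrow> real" where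
  "ph G v \<eta> f t = edge_fun G f (fst \<eta>) (coord G v \<eta> + (if snd \<eta> then t else - t))"

definition pt :: "('v,'e) mgraph \<Rightarrow> ('v,'e) point \<Rightarrow> 'e \<times> bool \<Rightarrow> real \<Rightarrow> ('v,'e) point" where
  "pt G v \<eta> t = Inner (fst \<eta>) (coord G v \<eta> + (if snd \<eta> then t else - t))"

definition room :: "('v,'e) mgraph \<Rightarrow> ('v,'e) point \<Rightarrow> 'e \<times> bool \<Rightarrow> real" where
  "room G v \<eta> = (if snd \<eta> then elen G (fst \<eta>) - coord G v \<eta> else coord G v \<eta>)"

lemma geo:
  assumes "metric_graph G" "v \<in> points G" "\<eta> \<in> tangents G v"
  shows "fst \<eta> \<in> edges G" "room G v \<eta> > 0" "0 \<le> coord G v \<eta>" "coord G v \<eta> \<le> elen G (fst \<eta>)"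
    "ph G v \<eta> f 0 = f v"
    "0 < t \<Longrightarrow> t < room G v \<eta> \<Longrightarrow> pt G v \<eta> t \<in> points G"
    "0 < t \<Longrightarrow> t < room G v \<eta> \<Longrightarrow> ph G v \<eta> f t = f (pt G v \<eta> t)"
proof -
  have mg: "\<forall>e\<in>edges G. src G e \<in> verts G \<and> tgt G e \<in> verts G \<and> elen G e > 0"
    using assms(1) unfolding metric_graph_def by blast
  have "fst \<eta> \<in> edges G \<and> room G v \<eta> > 0 \<and> 0 \<le> coord G v \<eta> \<and> coord G v \<eta> \<le> elen G (fst \<eta>) \<and>
    ph G v \<eta> f 0 = f v \<and>
    (0 < t \<longrightarrow> t < room G v \<eta> \<longrightarrow> pt G v \<eta> t \<in> points G \<and> ph G v \<eta> f t = f (pt G v \<eta> t))"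
  proof (cases v)
    case (Vert x)
    obtain e b where eta: "\<eta> = (e, b)" by (cases \<eta>)
    show ?thesis
    proof (cases b)
      case True
      then have e: "e \<in> edges G" "src G e = x" using assms(3) Vert eta unfolding tangents_def by auto
      have L: "elen G e > 0" using mg e by auto
      show ?thesis using e L True unfolding eta Vert ph_def pt_def room_def coord_def edge_fun_def points_def
        by auto
    next
      case False
      then have e: "e \<in> edges G" "tgt G e = x" using assms(3) Vert eta unfolding tangents_def by auto
      have L: "elen G e > 0" using mg e by auto
      show ?thesis using e L False unfolding eta Vert ph_def pt_def room_def coord_def edge_fun_def points_def
        by auto
    qed
  next
    case (Inner e0 t0)
    have e0: "e0 \<in> edges G" "0 < t0" "t0 < elen G e0" using assms(2) Inner unfolding points_def by auto
    obtain e b where eta: "\<eta> = (e, b)" by (cases \<eta>)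
    have ee: "e = e0" using assms(3) Inner eta unfolding tangents_def by auto
    show ?thesis using e0 unfolding eta ee Inner ph_def pt_def room_def coord_def edge_fun_def points_def
      by auto
  qed
  then show "fst \<eta> \<in> edges G" "room G v \<eta> > 0" "0 \<le> coord G v \<eta>" "coord G v \<eta> \<le> elen G (fst \<eta>)"
    "ph G v \<eta> f 0 = f v"
    "0 < t \<Longrightarrow> t < room G v \<eta> \<Longrightarrow> pt G v \<eta> t \<in> points G"
    "0 < t \<Longrightarrow> t < room G v \<eta> \<Longrightarrow> ph G v \<eta> f t = f (pt G v \<eta> t)" by auto
qed

lemma pt_inj: "pt G v \<eta> t = pt G v \<eta> t' \<Longrightarrow> t = t'"
  unfolding pt_def by (auto split: if_splits)

lemma pt_disj:
  assumes "metric_graph G" "v \<in> points G" "\<eta> \<in> tangents G v" "\<eta>' \<in> tangents G v" "\<eta> \<noteq> \<eta>'"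
    "0 < t" "2 * t < room G v \<eta>" "0 < t'" "2 * t' < room G v \<eta>'"
  shows "pt G v \<eta> t \<noteq> pt G v \<eta>' t'"
proof
  assume eq: "pt G v \<eta> t = pt G v \<eta>' t'"
  obtain e b where eta: "\<eta> = (e, b)" by (cases \<eta>)
  obtain e' b' where eta': "\<eta>' = (e', b')" by (cases \<eta>')
  have ee: "e' = e" using eq unfolding eta eta' pt_def by auto
  have bb: "b' = (\<not> b)" using assms(5) unfolding eta eta' ee by auto
  show False
  proof (cases v)
    case (Vert x)
    show False using eq assms(6-9) unfolding eta eta' ee bb Vert pt_def coord_def room_def
      by (cases b) auto
  next
    case (Inner e0 t0)
    show False using eq assms(6-9) unfolding eta eta' ee bb Inner pt_def coord_def room_def
      by (cases b) auto
  qed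
qed




lemma slope_ph: "slope G f v \<eta> = Lim (at_right 0) (\<lambda>h. (ph G v \<eta> f h - ph G v \<eta> f 0) / h)"
  unfolding slope_def ph_def by simp

lemma slope_lin:
  assumes "e > 0" "\<forall>h. 0 < h \<and> h < e \<longrightarrow> ph G v \<eta> f h = ph G v \<eta> f 0 + s * h"
  shows "slope G f v \<eta> = s"
  unfolding slope_ph
proof (rule Lim_ev)
  show "\<forall>\<^sub>F h in at_right 0. (ph G v \<eta> f h - ph G v \<eta> f 0) / h = s"
    unfolding eventually_at_right_field
  proof (intro exI[of _ e] conjI allI impI)
    fix h :: real assume h: "0 < h" "h < e"
    then have "ph G v \<eta> f h = ph G v \<eta> f 0 + s * h" using assms(2) by blast
    then show "(ph G v \<eta> f h - ph G v \<eta> f 0) / h = s" using h by simp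
  qed (use assms in simp)
qed

lemma gen_lin:
  assumes "metric_graph G" "v \<in> points G" "\<eta> \<in> tangents G v" "PL G g"
  shows "\<exists>e>0. \<exists>m::int. \<forall>t. 0 \<le> t \<and> t \<le> e \<longrightarrow> ph G v \<eta> g t = ph G v \<eta> g 0 + of_int m * t"
proof -
  have ed: "fst \<eta> \<in> edges G" and r: "room G v \<eta> > 0" and c0: "0 \<le> coord G v \<eta>"
    and cL: "coord G v \<eta> \<le> elen G (fst \<eta>)" using geo[OF assms(1-3)] by auto
  have pl: "pl_int_on (elen G (fst \<eta>)) (edge_fun G g (fst \<eta>))" using assms(4) ed unfolding PL_def by auto
  show ?thesis
  proof (cases "snd \<eta>")
    case True
    then have "coord G v \<eta> < elen G (fst \<eta>)" using r unfolding room_def by auto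
    from pl_right[OF pl c0 this] obtain e m where em: "e > 0"
      "\<forall>x. coord G v \<eta> \<le> x \<and> x \<le> coord G v \<eta> + e \<longrightarrow> edge_fun G g (fst \<eta>) x = edge_fun G g (fst \<eta>) (coord G v \<eta>) + of_int m * (x - coord G v \<eta>)"
      by blast
    show ?thesis
    proof (intro exI[of _ e] conjI exI[of _ m] allI impI)
      fix t :: real assume t: "0 \<le> t \<and> t \<le> e"
      have "edge_fun G g (fst \<eta>) (coord G v \<eta> + t) = edge_fun G g (fst \<eta>) (coord G v \<eta>) + of_int m * ((coord G v \<eta> + t) - coord G v \<eta>)"
        using t by (intro em(2)[rule_format]) auto
      then show "ph G v \<eta> g t = ph G v \<eta> g 0 + of_int m * t" using True by (simp add: ph_def)
    qed (rule em(1))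
  next
    case False
    then have "0 < coord G v \<eta>" using r unfolding room_def by auto
    from pl_left[OF pl this cL] obtain e m where em: "e > 0"
      "\<forall>x. coord G v \<eta> - e \<le> x \<and> x \<le> coord G v \<eta> \<longrightarrow> edge_fun G g (fst \<eta>) x = edge_fun G g (fst \<eta>) (coord G v \<eta>) + of_int m * (x - coord G v \<eta>)"
      by blast
    show ?thesis
    proof (intro exI[of _ e] conjI exI[of _ "- m"] allI impI)
      fix t :: real assume t: "0 \<le> t \<and> t \<le> e"
      have "edge_fun G g (fst \<eta>) (coord G v \<eta> - t) = edge_fun G g (fst \<eta>) (coord G v \<eta>) + of_int m * ((coord G v \<eta> - t) - coord G v \<eta>)"
        using t by (intro em(2)[rule_format]) auto
      then show "ph G v \<eta> g t = ph G v \<eta> g 0 + of_int (- m) * t" using False by (simp add: ph_def)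
    qed (rule em(1))
  qed
qed

lemma divf_zero:
  assumes "metric_graph G" "v \<in> points G" "\<eta> \<in> tangents G v" "0 < t" "t < room G v \<eta>"
    "d > 0" "\<forall>x. \<bar>x - t\<bar> < d \<longrightarrow> ph G v \<eta> f x = ph G v \<eta> f t + s * (x - t)"
  shows "divf G f (pt G v \<eta> t) = 0"
proof -
  obtain e b where eta: "\<eta> = (e, b)" by (cases \<eta>)
  define \<tau> where "\<tau> = coord G v \<eta> + (if b then t else - t)"
  have p: "pt G v \<eta> t = Inner e \<tau>" unfolding pt_def \<tau>_def eta by simp
  have ph: "\<And>x. ph G v \<eta> f x = edge_fun G f e (coord G v \<eta> + (if b then x else - x))"
    unfolding ph_def eta by simp
  have s1: "slope G f (Inner e \<tau>) (e, True) = (if b then s else - s)"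
    unfolding slope_def
  proof (rule Lim_ev)
    show "\<forall>\<^sub>F h in at_right 0. (edge_fun G f (fst (e, True)) (coord G (Inner e \<tau>) (e, True) + (if snd (e, True) then h else - h)) -
          edge_fun G f (fst (e, True)) (coord G (Inner e \<tau>) (e, True))) / h = (if b then s else - s)"
      unfolding eventually_at_right_field
    proof (intro exI[of _ d] conjI allI impI)
      fix h :: real assume h: "0 < h" "h < d"
      have "edge_fun G f e (\<tau> + h) = ph G v \<eta> f (if b then t + h else t - h)"
        unfolding ph \<tau>_def by (auto simp: algebra_simps)
      also have "\<dots> = ph G v \<eta> f t + s * ((if b then t + h else t - h) - t)"
        using h by (intro assms(7)[rule_format]) auto
      finally have 1: "edge_fun G f e (\<tau> + h) = ph G v \<eta> f t + s * ((if b then t + h else t - h) - t)" .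
      have 2: "edge_fun G f e \<tau> = ph G v \<eta> f t" unfolding ph \<tau>_def by simp
      show "(edge_fun G f (fst (e, True)) (coord G (Inner e \<tau>) (e, True) + (if snd (e, True) then h else - h)) -
          edge_fun G f (fst (e, True)) (coord G (Inner e \<tau>) (e, True))) / h = (if b then s else - s)"
        using 1 2 h by (auto simp: coord_def)
    qed (use assms in auto)
  qed
  have s2: "slope G f (Inner e \<tau>) (e, False) = (if b then - s else s)"
    unfolding slope_def
  proof (rule Lim_ev)
    show "\<forall>\<^sub>F h in at_right 0. (edge_fun G f (fst (e, False)) (coord G (Inner e \<tau>) (e, False) + (if snd (e, False) then h else - h)) -
          edge_fun G f (fst (e, False)) (coord G (Inner e \<tau>) (e, False))) / h = (if b then - s else s)"
      unfolding eventually_at_right_field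
    proof (intro exI[of _ d] conjI allI impI)
      fix h :: real assume h: "0 < h" "h < d"
      have "edge_fun G f e (\<tau> - h) = ph G v \<eta> f (if b then t - h else t + h)"
        unfolding ph \<tau>_def by (auto simp: algebra_simps)
      also have "\<dots> = ph G v \<eta> f t + s * ((if b then t - h else t + h) - t)"
        using h by (intro assms(7)[rule_format]) auto
      finally have 1: "edge_fun G f e (\<tau> - h) = ph G v \<eta> f t + s * ((if b then t - h else t + h) - t)" .
      have 2: "edge_fun G f e \<tau> = ph G v \<eta> f t" unfolding ph \<tau>_def by simp
      show "(edge_fun G f (fst (e, False)) (coord G (Inner e \<tau>) (e, False) + (if snd (e, False) then h else - h)) -
          edge_fun G f (fst (e, False)) (coord G (Inner e \<tau>) (e, False))) / h = (if b then - s else s)"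
        using 1 2 h by (auto simp: coord_def)
    qed (use assms in auto)
  qed
  have "tangents G (Inner e \<tau>) = {(e, True), (e, False)}" unfolding tangents_def by simp
  then show ?thesis unfolding p divf_def using s1 s2 by simp
qed




lemma finite_tangents: "finite (edges G) \<Longrightarrow> finite (tangents G p)"
proof (cases p)
  case (Vert x)
  assume f: "finite (edges G)"
  have "tangents G p \<subseteq> edges G \<times> UNIV" unfolding Vert tangents_def by auto
  moreover have "finite (edges G \<times> (UNIV :: bool set))" using f by auto
  ultimately show ?thesis by (rule finite_subset)
next
  case (Inner e t)
  then show ?thesis unfolding tangents_def by simp
qed

locale tls =
  fixes G :: "('v,'e) mgraph" and r :: nat and D :: "('v,'e) point \<Rightarrow> int"
    and \<Sigma> :: "(('v,'e) point \<Rightarrow> real) set" and v :: "('v,'e) point"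
    and Gs :: "(('v,'e) point \<Rightarrow> real) set"
  assumes mg: "metric_graph G" and tl: "trop_lin_series G r D \<Sigma>" and vp: "v \<in> points G"
    and Gs: "finite Gs" "Gs \<subseteq> \<Sigma>"
      "\<forall>f\<in>\<Sigma>. \<exists>n fs a. n > 0 \<and> (\<forall>i<n. fs i \<in> Gs) \<and> (\<forall>p\<in>points G. f p = trop_comb n fs a p)"
begin

abbreviation "T \<equiv> tangents G v"
definition sg :: "'e \<times> bool \<Rightarrow> (('v,'e) point \<Rightarrow> real) \<Rightarrow> real" where
  "sg \<eta> g = slope G g v \<eta>"

lemma finT: "finite T"
  using mg unfolding metric_graph_def by (intro finite_tangents) auto

lemma Sigma_PL: "f \<in> \<Sigma> \<Longrightarrow> PL G f"
  using tl unfolding trop_lin_series_def RD_def by auto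

lemma gen_int: "\<eta> \<in> T \<Longrightarrow> g \<in> Gs \<Longrightarrow> \<exists>m::int. sg \<eta> g = of_int m"
proof -
  assume a: "\<eta> \<in> T" "g \<in> Gs"
  then have "PL G g" using Gs Sigma_PL by auto
  from gen_lin[OF mg vp a(1) this] obtain e m where em: "e > 0"
    "\<forall>t. 0 \<le> t \<and> t \<le> e \<longrightarrow> ph G v \<eta> g t = ph G v \<eta> g 0 + of_int m * t" by blast
  have "slope G g v \<eta> = of_int m"
    by (rule slope_lin[OF em(1)], intro allI impI em(2)[rule_format]) auto
  then show ?thesis unfolding sg_def by blast
qed

lemma eps_exists:
  "\<exists>\<epsilon>>0. (\<forall>\<eta>\<in>T. \<forall>g\<in>Gs. \<forall>t. 0 \<le> t \<and> t \<le> \<epsilon> \<longrightarrow> ph G v \<eta> g t = ph G v \<eta> g 0 + sg \<eta> g * t) \<and>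
     (\<forall>\<eta>\<in>T. 2 * \<epsilon> < room G v \<eta>) \<and>
     (\<forall>\<eta>\<in>T. \<forall>t. 0 < t \<and> t \<le> \<epsilon> \<longrightarrow> D (pt G v \<eta> t) = 0)"
proof -
  have A: "\<exists>e>0. \<forall>x\<in>T \<times> Gs. \<forall>t. 0 \<le> t \<and> t \<le> e \<longrightarrow> ph G v (fst x) (snd x) t = ph G v (fst x) (snd x) 0 + sg (fst x) (snd x) * t"
  proof (rule finite_small)
    show "finite (T \<times> Gs)" using finT Gs by auto
    show "\<forall>x\<in>T \<times> Gs. \<exists>e>0. \<forall>t. 0 \<le> t \<and> t \<le> e \<longrightarrow> ph G v (fst x) (snd x) t = ph G v (fst x) (snd x) 0 + sg (fst x) (snd x) * t"
    proof
      fix x assume x: "x \<in> T \<times> Gs"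
      then have "PL G (snd x)" using Gs Sigma_PL by auto
      have "fst x \<in> T" using x by auto
      from gen_lin[OF mg vp this \<open>PL G (snd x)\<close>] obtain e m where em: "e > 0"
        "\<forall>t. 0 \<le> t \<and> t \<le> e \<longrightarrow> ph G v (fst x) (snd x) t = ph G v (fst x) (snd x) 0 + of_int m * t" by blast
      have "slope G (snd x) v (fst x) = of_int m"
        by (rule slope_lin[OF em(1)], intro allI impI em(2)[rule_format]) auto
      then show "\<exists>e>0. \<forall>t. 0 \<le> t \<and> t \<le> e \<longrightarrow> ph G v (fst x) (snd x) t = ph G v (fst x) (snd x) 0 + sg (fst x) (snd x) * t"
        using em unfolding sg_def by metis
    qed
  next
    fix x e e'
    assume "\<forall>t. 0 \<le> t \<and> t \<le> e \<longrightarrow> ph G v (fst x) (snd x) t = ph G v (fst x) (snd x) 0 + sg (fst x) (snd x) * t"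
      "0 < e'" "e' \<le> (e::real)"
    then show "\<forall>t. 0 \<le> t \<and> t \<le> e' \<longrightarrow> ph G v (fst x) (snd x) t = ph G v (fst x) (snd x) 0 + sg (fst x) (snd x) * t"
      by (meson order_trans)
  qed
  have B: "\<exists>e>0. \<forall>\<eta>\<in>T. 2 * e < room G v \<eta>"
  proof (rule finite_small)
    show "\<forall>\<eta>\<in>T. \<exists>e>0. 2 * e < room G v \<eta>"
    proof
      fix \<eta> assume "\<eta> \<in> T"
      then have "room G v \<eta> > 0" using geo[OF mg vp] by auto
      then show "\<exists>e>0. 2 * e < room G v \<eta>" by (intro exI[of _ "room G v \<eta> / 4"]) auto
    qed
  qed (use finT in auto)
  have finD: "finite {p. D p \<noteq> 0}" using tl unfolding trop_lin_series_def divisor_def by auto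
  have C: "\<exists>e>0. \<forall>x\<in>T \<times> {p. D p \<noteq> 0}. \<forall>t. 0 < t \<and> t \<le> e \<longrightarrow> pt G v (fst x) t \<noteq> snd x"
  proof (rule finite_small)
    show "finite (T \<times> {p. D p \<noteq> 0})" using finT finD by auto
    show "\<forall>x\<in>T \<times> {p. D p \<noteq> 0}. \<exists>e>0. \<forall>t. 0 < t \<and> t \<le> e \<longrightarrow> pt G v (fst x) t \<noteq> snd x"
    proof
      fix x assume x: "x \<in> T \<times> {p. D p \<noteq> 0}"
      show "\<exists>e>0. \<forall>t. 0 < t \<and> t \<le> e \<longrightarrow> pt G v (fst x) t \<noteq> snd x"
      proof (cases "\<exists>t0>0. pt G v (fst x) t0 = snd x")
        case True
        then obtain t0 where t0: "t0 > 0" "pt G v (fst x) t0 = snd x" by auto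
        show ?thesis
        proof (intro exI[of _ "t0 / 2"] conjI allI impI)
          fix t assume t: "0 < t \<and> t \<le> t0 / 2"
          show "pt G v (fst x) t \<noteq> snd x"
          proof
            assume "pt G v (fst x) t = snd x"
            then have "t = t0" using t0 pt_inj by metis
            then show False using t t0 by auto
          qed
        qed (use t0 in auto)
      next
        case False
        then show ?thesis by (intro exI[of _ 1]) auto
      qed
    qed
  qed auto
  obtain e1 where e1: "e1 > 0" "\<forall>x\<in>T \<times> Gs. \<forall>t. 0 \<le> t \<and> t \<le> e1 \<longrightarrow> ph G v (fst x) (snd x) t = ph G v (fst x) (snd x) 0 + sg (fst x) (snd x) * t"
    using A by blast
  obtain e2 where e2: "e2 > 0" "\<forall>\<eta>\<in>T. 2 * e2 < room G v \<eta>" using B by blast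
  obtain e3 where e3: "e3 > 0" "\<forall>x\<in>T \<times> {p. D p \<noteq> 0}. \<forall>t. 0 < t \<and> t \<le> e3 \<longrightarrow> pt G v (fst x) t \<noteq> snd x"
    using C by blast
  define \<epsilon> where "\<epsilon> = min e1 (min e2 e3)"
  show ?thesis
  proof (intro exI[of _ \<epsilon>] conjI ballI allI impI)
    show "\<epsilon> > 0" unfolding \<epsilon>_def using e1 e2 e3 by auto
  next
    fix \<eta> g t assume a: "\<eta> \<in> T" "g \<in> Gs" "0 \<le> t \<and> t \<le> \<epsilon>"
    then show "ph G v \<eta> g t = ph G v \<eta> g 0 + sg \<eta> g * t"
      using e1(2)[rule_format, of "(\<eta>, g)" t] unfolding \<epsilon>_def by auto
  next
    fix \<eta> assume "\<eta> \<in> T"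
    then show "2 * \<epsilon> < room G v \<eta>" using e2 unfolding \<epsilon>_def by force
  next
    fix \<eta> t assume a: "\<eta> \<in> T" "0 < t \<and> t \<le> \<epsilon>"
    show "D (pt G v \<eta> t) = 0"
    proof (rule ccontr)
      assume "D (pt G v \<eta> t) \<noteq> 0"
      then show False using e3(2)[rule_format, of "(\<eta>, pt G v \<eta> t)" t] a unfolding \<epsilon>_def by auto
    qed
  qed
qed

end




locale tls2 = tls +
  fixes \<epsilon> :: real
  assumes epos: "\<epsilon> > 0"
    and elin: "\<forall>\<eta>\<in>T. \<forall>g\<in>Gs. \<forall>t. 0 \<le> t \<and> t \<le> \<epsilon> \<longrightarrow> ph G v \<eta> g t = ph G v \<eta> g 0 + sg \<eta> g * t"
    and eroom: "\<forall>\<eta>\<in>T. 2 * \<epsilon> < room G v \<eta>"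
    and eD: "\<forall>\<eta>\<in>T. \<forall>t. 0 < t \<and> t \<le> \<epsilon> \<longrightarrow> D (pt G v \<eta> t) = 0"
begin

definition isrep where
  "isrep f n fs a \<longleftrightarrow> n > 0 \<and> (\<forall>i<n. fs i \<in> Gs) \<and> (\<forall>p\<in>points G. f p = trop_comb n fs a p)"

lemma rep_ex: "f \<in> \<Sigma> \<Longrightarrow> \<exists>n fs a. isrep f n fs a"
  using Gs(3) unfolding isrep_def by blast

lemma rep_ph:
  assumes "isrep f n fs a" "\<eta> \<in> T" "0 \<le> t" "t \<le> \<epsilon>"
  shows "ph G v \<eta> f t = lmin n (\<lambda>i. fs i v + a i) (\<lambda>i. sg \<eta> (fs i)) t"
proof (cases "t = 0")
  case True
  have "ph G v \<eta> f t = f v" using geo(5)[OF mg vp assms(2)] True by simp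
  also have "\<dots> = trop_comb n fs a v" using assms(1) vp unfolding isrep_def by blast
  also have "\<dots> = lmin n (\<lambda>i. fs i v + a i) (\<lambda>i. sg \<eta> (fs i)) t"
    unfolding trop_comb_def lmin_def True by simp
  finally show ?thesis .
next
  case False
  then have t: "0 < t" "t < room G v \<eta>" using assms eroom by force+
  have pp: "pt G v \<eta> t \<in> points G" using geo(6)[OF mg vp assms(2) t] .
  have "ph G v \<eta> f t = f (pt G v \<eta> t)" using geo(7)[OF mg vp assms(2) t] .
  also have "\<dots> = trop_comb n fs a (pt G v \<eta> t)" using assms(1) pp unfolding isrep_def by blast
  also have "\<dots> = lmin n (\<lambda>i. fs i v + a i) (\<lambda>i. sg \<eta> (fs i)) t"
    unfolding trop_comb_def lmin_def
  proof (rule arg_cong[where f = Min], rule image_cong[OF refl])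
    fix i assume "i \<in> {..<n}"
    then have gi: "fs i \<in> Gs" using assms(1) unfolding isrep_def by auto
    have "fs i (pt G v \<eta> t) = ph G v \<eta> (fs i) t" using geo(7)[OF mg vp assms(2) t] by simp
    also have "\<dots> = ph G v \<eta> (fs i) 0 + sg \<eta> (fs i) * t" using elin assms gi by blast
    also have "\<dots> = fs i v + sg \<eta> (fs i) * t" using geo(5)[OF mg vp assms(2)] by simp
    finally show "fs i (pt G v \<eta> t) + a i = fs i v + a i + sg \<eta> (fs i) * t" by simp
  qed
  finally show ?thesis .
qed

lemma slope_v:
  assumes "isrep f n fs a" "\<eta> \<in> T"
  shows "\<exists>i0\<in>act n (\<lambda>i. fs i v + a i) (\<lambda>i. sg \<eta> (fs i)) 0. slope G f v \<eta> = sg \<eta> (fs i0) \<and>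
           (\<forall>i\<in>act n (\<lambda>i. fs i v + a i) (\<lambda>i. sg \<eta> (fs i)) 0. sg \<eta> (fs i0) \<le> sg \<eta> (fs i))"
proof -
  define C where "C = (\<lambda>i. fs i v + a i)"
  define s where "s = (\<lambda>i. sg \<eta> (fs i))"
  define A where "A = act n C s 0"
  have n: "n > 0" using assms unfolding isrep_def by auto
  have finA: "finite A" unfolding A_def act_def by auto
  have neA: "A \<noteq> {}" unfolding A_def using act_ne[OF n] .
  have "Min (s ` A) \<in> s ` A" using finA neA by simp
  then obtain i0 where i0: "i0 \<in> A" "s i0 = Min (s ` A)" by auto
  have i0min: "\<forall>i\<in>A. s i0 \<le> s i" using i0 finA by auto
  define m where "m = lmin n C s 0"
  have CA: "\<forall>i\<in>A. C i = m" unfolding A_def act_def m_def by auto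
  obtain d where d: "d > 0" "\<forall>x. \<bar>x - 0\<bar> < d \<longrightarrow> lmin n C s x = Min ((\<lambda>i. C i + s i * x) ` A)"
    using lines_local[OF n, of 0 C s] unfolding A_def by blast
  have "slope G f v \<eta> = s i0"
  proof (rule slope_lin)
    show "min d \<epsilon> > 0" using d epos by auto
    show "\<forall>h. 0 < h \<and> h < min d \<epsilon> \<longrightarrow> ph G v \<eta> f h = ph G v \<eta> f 0 + s i0 * h"
    proof (intro allI impI)
      fix h :: real assume h: "0 < h \<and> h < min d \<epsilon>"
      have "ph G v \<eta> f h = lmin n C s h" unfolding C_def s_def using rep_ph[OF assms] h by auto
      also have "\<dots> = Min ((\<lambda>i. C i + s i * h) ` A)" using d(2) h by auto
      also have "\<dots> = m + s i0 * h"
      proof (rule antisym)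
        show "Min ((\<lambda>i. C i + s i * h) ` A) \<le> m + s i0 * h"
          using i0(1) CA finA by (metis (no_types, lifting) Min_le finite_imageI image_eqI)
        show "m + s i0 * h \<le> Min ((\<lambda>i. C i + s i * h) ` A)"
        proof (rule Min.boundedI)
          show "finite ((\<lambda>i. C i + s i * h) ` A)" using finA by simp
          show "(\<lambda>i. C i + s i * h) ` A \<noteq> {}" using neA by simp
          fix y assume "y \<in> (\<lambda>i. C i + s i * h) ` A"
          then obtain i where i: "i \<in> A" "y = C i + s i * h" by auto
          have "s i0 * h \<le> s i * h" using i0min i h by (intro mult_right_mono) auto
          then show "m + s i0 * h \<le> y" using i CA by auto
        qed
      qed
      also have "m = ph G v \<eta> f 0" unfolding m_def C_def s_def using rep_ph[OF assms, of 0] epos by auto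
      finally show "ph G v \<eta> f h = ph G v \<eta> f 0 + s i0 * h" .
    qed
  qed
  then show ?thesis using i0 i0min unfolding A_def C_def s_def by blast
qed

lemma bend:
  assumes "isrep f n fs a" "\<eta> \<in> T" "0 < t" "t < \<epsilon>" "divf G f (pt G v \<eta> t) \<noteq> 0"
  shows "\<exists>i\<in>act n (\<lambda>i. fs i v + a i) (\<lambda>i. sg \<eta> (fs i)) t. \<exists>k\<in>act n (\<lambda>i. fs i v + a i) (\<lambda>i. sg \<eta> (fs i)) t.
           sg \<eta> (fs i) < sg \<eta> (fs k)"
proof (rule ccontr)
  define C where "C = (\<lambda>i. fs i v + a i)"
  define s where "s = (\<lambda>i. sg \<eta> (fs i))"
  define A where "A = act n C s t"
  assume "\<not> ?thesis"
  then have eq: "\<forall>i\<in>A. \<forall>k\<in>A. s i = s k" unfolding A_def C_def s_def by (meson linorder_neqE)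
  have n: "n > 0" using assms unfolding isrep_def by auto
  have finA: "finite A" unfolding A_def act_def by auto
  obtain i0 where i0: "i0 \<in> A" using act_ne[OF n] unfolding A_def by blast
  have CA: "\<forall>i\<in>A. C i + s i * t = lmin n C s t" unfolding A_def act_def by auto
  obtain d where d: "d > 0" "\<forall>x. \<bar>x - t\<bar> < d \<longrightarrow> lmin n C s x = Min ((\<lambda>i. C i + s i * x) ` A)"
    using lines_local[OF n, of t C s] unfolding A_def by blast
  have r: "t < room G v \<eta>" using eroom assms by force
  have "divf G f (pt G v \<eta> t) = 0"
  proof (rule divf_zero[OF mg vp assms(2) assms(3) r])
    show "min d (min t (\<epsilon> - t)) > 0" using d assms by auto
    show "\<forall>x. \<bar>x - t\<bar> < min d (min t (\<epsilon> - t)) \<longrightarrow> ph G v \<eta> f x = ph G v \<eta> f t + s i0 * (x - t)"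
    proof (intro allI impI)
      fix x assume x: "\<bar>x - t\<bar> < min d (min t (\<epsilon> - t))"
      have px: "ph G v \<eta> f x = lmin n C s x" unfolding C_def s_def using rep_ph[OF assms(1,2), of x] x by auto
      have pt: "ph G v \<eta> f t = lmin n C s t" unfolding C_def s_def using rep_ph[OF assms(1,2), of t] assms by auto
      have "lmin n C s x = Min ((\<lambda>i. C i + s i * x) ` A)" using d(2) x by auto
      also have "(\<lambda>i. C i + s i * x) ` A = (\<lambda>i. lmin n C s t + s i0 * (x - t)) ` A"
      proof (rule image_cong[OF refl])
        fix i assume i: "i \<in> A"
        have "C i + s i * t = lmin n C s t" using CA i by auto
        moreover have "s i = s i0" using eq i i0 by blast
        ultimately show "C i + s i * x = lmin n C s t + s i0 * (x - t)" by (simp add: algebra_simps)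
      qed
      also have "\<dots> = {lmin n C s t + s i0 * (x - t)}" using i0 by auto
      finally show "ph G v \<eta> f x = ph G v \<eta> f t + s i0 * (x - t)" using px pt by simp
    qed
  qed
  then show False using assms(5) by simp
qed

end




context tls2
begin

lemma slope_set_sub: "\<eta> \<in> T \<Longrightarrow> slope_set G \<Sigma> v \<eta> \<subseteq> sg \<eta> ` Gs"
proof
  fix y assume eta: "\<eta> \<in> T" and "y \<in> slope_set G \<Sigma> v \<eta>"
  then obtain f where f: "f \<in> \<Sigma>" "y = slope G f v \<eta>" unfolding slope_set_def by auto
  obtain n fs a where rep: "isrep f n fs a" using rep_ex[OF f(1)] by blast
  obtain i0 where i0: "i0 \<in> act n (\<lambda>i. fs i v + a i) (\<lambda>i. sg \<eta> (fs i)) 0" "slope G f v \<eta> = sg \<eta> (fs i0)"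
    using slope_v[OF rep eta] by blast
  have "fs i0 \<in> Gs" using i0(1) rep unfolding act_def isrep_def by auto
  then show "y \<in> sg \<eta> ` Gs" using f i0 by auto
qed

lemma finite_S: "\<eta> \<in> T \<Longrightarrow> finite (slope_set G \<Sigma> v \<eta>)"
  using slope_set_sub Gs(1) finite_subset by blast

lemma gen_in_S: "g \<in> \<Sigma> \<Longrightarrow> slope G g v \<eta> \<in> slope_set G \<Sigma> v \<eta>"
  unfolding slope_set_def by auto

lemma card_S: assumes eta: "\<eta> \<in> T" shows "card (slope_set G \<Sigma> v \<eta>) \<le> r + 1"
proof (rule ccontr)
  define S where "S = slope_set G \<Sigma> v \<eta>"
  assume "\<not> ?thesis"
  then have "r + 2 \<le> card S" unfolding S_def by auto
  then obtain S' where S': "S' \<subseteq> S" "card S' = r + 2" "finite S'" by (rule obtain_subset_with_card_n)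
  obtain h where h: "bij_betw h {0..<r+2} S'" using ex_bij_betw_nat_finite[OF S'(3)] S'(2) by auto
  define fs where "fs = (\<lambda>k. SOME g. g \<in> Gs \<and> sg \<eta> g = h k)"
  have fsk: "fs k \<in> Gs \<and> sg \<eta> (fs k) = h k" if k: "k < r + 2" for k
  proof -
    have "h k \<in> S'" using h k unfolding bij_betw_def by auto
    then have "h k \<in> sg \<eta> ` Gs" using S'(1) slope_set_sub[OF eta] unfolding S_def by auto
    then have "\<exists>g. g \<in> Gs \<and> sg \<eta> g = h k" by auto
    then show ?thesis unfolding fs_def by (rule someI_ex)
  qed
  have distinct: "sg \<eta> (fs k) \<noteq> sg \<eta> (fs l)" if "k < r + 2" "l < r + 2" "k \<noteq> l" for k l
  proof -
    have "h k \<noteq> h l" using h that unfolding bij_betw_def inj_on_def by auto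
    then show ?thesis using fsk that by auto
  qed
  have "\<forall>i<r+2. fs i \<in> \<Sigma>" using fsk Gs(2) by auto
  then have "trop_dependent G (r+2) fs" using tl unfolding trop_lin_series_def by blast
  then obtain a :: "nat \<Rightarrow> real" where a: "\<forall>p\<in>points G. \<exists>i1<r+2. \<exists>i2<r+2. i1 \<noteq> i2 \<and>
        fs i1 p + a i1 = trop_comb (r+2) fs a p \<and> fs i2 p + a i2 = trop_comb (r+2) fs a p"
    unfolding trop_dependent_def by blast
  define X where "X = (\<lambda>(k,l). (fs k v + a k - fs l v - a l) / (sg \<eta> (fs l) - sg \<eta> (fs k))) ` ({..<r+2} \<times> {..<r+2})"
  have "finite X" unfolding X_def by auto
  then have "infinite ({0<..<\<epsilon>} - X)" using infinite_Ioo[of 0 \<epsilon>] epos by (intro Diff_infinite_finite) auto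
  then obtain t where t: "t \<in> {0<..<\<epsilon>}" "t \<notin> X" by (metis Diff_iff finite.emptyI ex_in_conv)
  have tr: "0 < t" "t < room G v \<eta>" using t eroom eta by force+
  have pp: "pt G v \<eta> t \<in> points G" using geo(6)[OF mg vp eta tr] .
  obtain i1 i2 where ii0: "i1 < r+2" "i2 < r+2" "i1 \<noteq> i2" "fs i1 (pt G v \<eta> t) + a i1 = trop_comb (r+2) fs a (pt G v \<eta> t)"
     "fs i2 (pt G v \<eta> t) + a i2 = trop_comb (r+2) fs a (pt G v \<eta> t)"
    using a[rule_format, OF pp] by blast
  have ii: "i1 < r+2" "i2 < r+2" "i1 \<noteq> i2" "fs i1 (pt G v \<eta> t) + a i1 = fs i2 (pt G v \<eta> t) + a i2"
    using ii0 by linarith+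
  have val: "fs k (pt G v \<eta> t) = fs k v + sg \<eta> (fs k) * t" if "k < r + 2" for k
  proof -
    have "fs k (pt G v \<eta> t) = ph G v \<eta> (fs k) t" using geo(7)[OF mg vp eta tr] by simp
    also have "\<dots> = ph G v \<eta> (fs k) 0 + sg \<eta> (fs k) * t" by (rule elin[rule_format]) (use eta fsk[OF that] t in auto)
    also have "\<dots> = fs k v + sg \<eta> (fs k) * t" using geo(5)[OF mg vp eta] by simp
    finally show ?thesis .
  qed
  have "fs i1 v + sg \<eta> (fs i1) * t + a i1 = fs i2 v + sg \<eta> (fs i2) * t + a i2" using ii val by auto
  then have "t * (sg \<eta> (fs i1) - sg \<eta> (fs i2)) = fs i2 v + a i2 - fs i1 v - a i1" by (simp add: algebra_simps)
  moreover have "sg \<eta> (fs i1) - sg \<eta> (fs i2) \<noteq> 0" using distinct ii by auto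
  ultimately have "t = (fs i2 v + a i2 - fs i1 v - a i1) / (sg \<eta> (fs i1) - sg \<eta> (fs i2))"
    by (simp add: field_simps)
  then have "t \<in> X" unfolding X_def using ii by force
  then show False using t by simp
qed

definition arr where
  "arr eta f = (\<lambda>k. if k < valence G v then idx (slope_set G \<Sigma> v (eta k)) (slope G f v (eta k)) else 0)"

lemma arr_in:
  assumes "f \<in> \<Sigma>" "\<forall>k<valence G v. eta k \<in> T"
  shows "arr eta f \<in> local_array G r \<Sigma> v eta"
  unfolding local_array_def
proof (intro CollectI conjI allI impI bexI[of _ f] assms(1))
  fix k assume k: "k < valence G v"
  have fin: "finite (slope_set G \<Sigma> v (eta k))" using finite_S assms(2) k by auto
  have mem: "slope G f v (eta k) \<in> slope_set G \<Sigma> v (eta k)" using gen_in_S[OF assms(1)] .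
  have c: "card (slope_set G \<Sigma> v (eta k)) \<le> r + 1" using card_S assms(2) k by auto
  show "arr eta f k \<le> r" using nth_idx(2)[OF fin mem] c k unfolding arr_def by auto
  show "slope G f v (eta k) = sl_idx G \<Sigma> v (eta k) (arr eta f k)"
    using nth_idx(1)[OF fin mem] k unfolding arr_def sl_idx_def by auto
next
  fix k assume "valence G v \<le> k" then show "arr eta f k = 0" unfolding arr_def by auto
qed

end




context tls2
begin

lemma main:
  assumes eta: "bij_betw eta {..<valence G v} T"
    and ij: "i < valence G v" "j < valence G v" "i \<noteq> j" and rr: "ri + rj = r"
  shows "\<exists>z w u.
           z \<in> local_array G r \<Sigma> v eta \<and>
           (\<forall>k\<in>{1..ri}. w k \<in> local_array G r \<Sigma> v eta) \<and>
           (\<forall>k\<in>{1..rj}. u k \<in> local_array G r \<Sigma> v eta) \<and>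
           (\<forall>k. 1 \<le> k \<and> k < ri \<longrightarrow> w k i < w (Suc k) i) \<and>
           (ri \<ge> 1 \<longrightarrow> w ri i < z i) \<and>
           (\<forall>k. 1 \<le> k \<and> k < rj \<longrightarrow> u k j < u (Suc k) j) \<and>
           (rj \<ge> 1 \<longrightarrow> u rj j < z j) \<and>
           (\<forall>k\<in>{1..rj}. \<forall>k'\<in>{1..ri}. u k j < w k' j)"
proof -
  have etaT: "\<forall>k<valence G v. eta k \<in> T" using eta unfolding bij_betw_def by auto
  define \<eta>i where "\<eta>i = eta i"
  define \<eta>j where "\<eta>j = eta j"
  have \<eta>iT: "\<eta>i \<in> T" and \<eta>jT: "\<eta>j \<in> T" using etaT ij unfolding \<eta>i_def \<eta>j_def by auto
  have \<eta>ij: "\<eta>i \<noteq> \<eta>j" using eta ij unfolding bij_betw_def inj_on_def \<eta>i_def \<eta>j_def by auto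
  define K where "K = 2 * (\<Sum>g\<in>Gs. \<bar>sg \<eta>i g\<bar>)"
  have K0: "K \<ge> 0" unfolding K_def by (simp add: sum_nonneg)
  define \<delta> where "\<delta> = \<epsilon> / (2 * (K + 1))"
  have \<delta>0: "\<delta> > 0" unfolding \<delta>_def using epos K0 by auto
  have \<delta>e: "\<delta> \<le> \<epsilon> / 2" unfolding \<delta>_def using epos K0 by (simp add: field_simps)
  have K\<delta>: "K * \<delta> < \<epsilon> / 2"
  proof -
    have "K * \<delta> = (\<epsilon> / 2) * (K / (K + 1))" unfolding \<delta>_def using K0 by (simp add: field_simps)
    also have "\<dots> < (\<epsilon> / 2) * 1" using K0 epos by (intro mult_strict_left_mono) auto
    finally show ?thesis by simp
  qed
  define tI where "tI = (\<lambda>k::nat. \<delta> * real k / (real ri + 1))"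
  define tJ where "tJ = (\<lambda>k::nat. \<epsilon> / 2 + \<epsilon> * real k / (2 * (real rj + 1)))"
  have tI0: "0 < tI k" "tI k < \<delta>" if "k \<in> {1..ri}" for k
  proof -
    have k: "1 \<le> real k" "real k \<le> real ri" using that by auto
    show "0 < tI k" unfolding tI_def using k \<delta>0 by auto
    have "\<delta> * real k < \<delta> * (real ri + 1)" using k \<delta>0 by (intro mult_strict_left_mono) auto
    then show "tI k < \<delta>" unfolding tI_def by (simp add: field_simps)
  qed
  have tImono: "tI k < tI l" if "k < l" for k l
  proof -
    have "\<delta> * real k < \<delta> * real l" using that \<delta>0 by simp
    then show ?thesis unfolding tI_def by (intro divide_strict_right_mono) auto
  qed
  have tJ0: "\<epsilon> / 2 < tJ k" "tJ k < \<epsilon>" if "k \<in> {1..rj}" for k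
  proof -
    have k: "1 \<le> real k" "real k \<le> real rj" using that by auto
    show "\<epsilon> / 2 < tJ k" unfolding tJ_def using k epos by auto
    have "\<epsilon> * real k < \<epsilon> * (real rj + 1)" using k epos by (intro mult_strict_left_mono) auto
    then show "tJ k < \<epsilon>" unfolding tJ_def by (simp add: field_simps)
  qed
  have tJmono: "tJ k < tJ l" if "k < l" for k l
  proof -
    have "\<epsilon> * real k < \<epsilon> * real l" using that epos by simp
    then have "\<epsilon> * real k / (2 * (real rj + 1)) < \<epsilon> * real l / (2 * (real rj + 1))"
      by (intro divide_strict_right_mono) auto
    then show ?thesis unfolding tJ_def by simp
  qed
  have tIe: "0 < tI k" "tI k < \<epsilon>" if "k \<in> {1..ri}" for k using tI0[OF that] \<delta>e epos by auto
  have tJe: "0 < tJ k" "tJ k < \<epsilon>" if "k \<in> {1..rj}" for k using tJ0[OF that] epos by auto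
  define PI where "PI = (\<lambda>k. pt G v \<eta>i (tI k)) ` {1..ri}"
  define PJ where "PJ = (\<lambda>k. pt G v \<eta>j (tJ k)) ` {1..rj}"
  define P where "P = PI \<union> PJ"
  have roomI: "2 * tI k < room G v \<eta>i" if "k \<in> {1..ri}" for k using tIe[OF that] eroom \<eta>iT by force
  have roomJ: "2 * tJ k < room G v \<eta>j" if "k \<in> {1..rj}" for k using tJe[OF that] eroom \<eta>jT by force
  have PIpts: "PI \<subseteq> points G"
    unfolding PI_def using geo(6)[OF mg vp \<eta>iT] tIe roomI by force
  have PJpts: "PJ \<subseteq> points G"
    unfolding PJ_def using geo(6)[OF mg vp \<eta>jT] tJe roomJ by force
  have cPI: "card PI = ri"
  proof -
    have "inj_on (\<lambda>k. pt G v \<eta>i (tI k)) {1..ri}"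
    proof (rule inj_onI)
      fix k l assume "k \<in> {1..ri}" "l \<in> {1..ri}" "pt G v \<eta>i (tI k) = pt G v \<eta>i (tI l)"
      then have "tI k = tI l" using pt_inj by metis
      then show "k = l" using tImono by (metis linorder_neqE_nat less_irrefl)
    qed
    then show ?thesis unfolding PI_def by (simp add: card_image)
  qed
  have cPJ: "card PJ = rj"
  proof -
    have "inj_on (\<lambda>k. pt G v \<eta>j (tJ k)) {1..rj}"
    proof (rule inj_onI)
      fix k l assume "k \<in> {1..rj}" "l \<in> {1..rj}" "pt G v \<eta>j (tJ k) = pt G v \<eta>j (tJ l)"
      then have "tJ k = tJ l" using pt_inj by metis
      then show "k = l" using tJmono by (metis linorder_neqE_nat less_irrefl)
    qed
    then show ?thesis unfolding PJ_def by (simp add: card_image)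
  qed
  have disj: "PI \<inter> PJ = {}"
  proof (rule ccontr)
    assume "PI \<inter> PJ \<noteq> {}"
    then obtain p where p: "p \<in> PI" "p \<in> PJ" by blast
    from p(1) obtain k where k: "k \<in> {1..ri}" "p = pt G v \<eta>i (tI k)" unfolding PI_def by blast
    from p(2) obtain l where l: "l \<in> {1..rj}" "p = pt G v \<eta>j (tJ l)" unfolding PJ_def by blast
    have kl: "k \<in> {1..ri}" "l \<in> {1..rj}" "pt G v \<eta>i (tI k) = pt G v \<eta>j (tJ l)" using k l by auto
    show False using pt_disj[OF mg vp \<eta>iT \<eta>jT \<eta>ij tIe(1)[OF kl(1)] roomI[OF kl(1)] tJe(1)[OF kl(2)] roomJ[OF kl(2)]] kl(3) by simp
  qed
  have finP: "finite P" unfolding P_def PI_def PJ_def by simp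
  have cP: "card P = r" unfolding P_def using card_Un_disjoint[of PI PJ] disj cPI cPJ rr unfolding PI_def PJ_def by simp
  define E where "E = (\<lambda>p. if p \<in> P then (1::int) else 0)"
  have suppE: "{p. E p \<noteq> 0} = P" unfolding E_def by auto
  have effE: "effective_divisor G E"
    unfolding effective_divisor_def divisor_def suppE using finP PIpts PJpts unfolding P_def E_def by auto
  have degE: "deg E = int r" unfolding deg_def suppE using cP unfolding E_def by simp
  obtain f where f: "f \<in> \<Sigma>" "\<forall>p\<in>points G. real_of_int (D p) + divf G f p \<ge> real_of_int (E p)"
    using tl effE degE unfolding trop_lin_series_def by blast
  obtain n fs a where rep: "isrep f n fs a" using rep_ex[OF f(1)] by blast
  have n: "n > 0" and fsG: "\<forall>i<n. fs i \<in> Gs" using rep unfolding isrep_def by auto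
  define C where "C = (\<lambda>i. fs i v + a i)"
  define sI where "sI = (\<lambda>i. sg \<eta>i (fs i))"
  define sJ where "sJ = (\<lambda>i. sg \<eta>j (fs i))"
  define SI where "SI = slope_set G \<Sigma> v \<eta>i"
  define SJ where "SJ = slope_set G \<Sigma> v \<eta>j"
  have finSI: "finite SI" and finSJ: "finite SJ" unfolding SI_def SJ_def using finite_S \<eta>iT \<eta>jT by auto
  have sIin: "sI k \<in> SI" if "k < n" for k
    unfolding sI_def SI_def sg_def using fsG that Gs(2) by (intro gen_in_S) auto
  have sJin: "sJ k \<in> SJ" if "k < n" for k
    unfolding sJ_def SJ_def sg_def using fsG that Gs(2) by (intro gen_in_S) auto
  have actn: "x < n" if "x \<in> act n C s t" for x s t using that unfolding act_def by auto
    have bendE: "divf G f (pt G v \<eta> t) \<noteq> 0" if "\<eta> \<in> T" "pt G v \<eta> t \<in> P" "0 < t" "t \<le> \<epsilon>"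
    "pt G v \<eta> t \<in> points G" for \<eta> t
  proof -
    have "D (pt G v \<eta> t) = 0" using eD that by blast
    moreover have "E (pt G v \<eta> t) = 1" using that unfolding E_def by auto
    ultimately show ?thesis using f(2) that(5) by force
  qed
  have "\<forall>k\<in>{1..ri}. \<exists>ab. fst ab \<in> act n C sI (tI k) \<and> snd ab \<in> act n C sI (tI k) \<and> sI (fst ab) < sI (snd ab)"
  proof
    fix k assume k: "k \<in> {1..ri}"
    have "pt G v \<eta>i (tI k) \<in> P" unfolding P_def PI_def using k by auto
    moreover have "pt G v \<eta>i (tI k) \<in> points G" using PIpts k unfolding PI_def by auto
    ultimately have "divf G f (pt G v \<eta>i (tI k)) \<noteq> 0" using bendE \<eta>iT tIe[OF k] by auto
    from bend[OF rep \<eta>iT tIe[OF k] this] show "\<exists>ab. fst ab \<in> act n C sI (tI k) \<and> snd ab \<in> act n C sI (tI k) \<and> sI (fst ab) < sI (snd ab)"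
      unfolding C_def sI_def by auto
  qed
  then obtain abI where abI: "\<forall>k\<in>{1..ri}. fst (abI k) \<in> act n C sI (tI k) \<and> snd (abI k) \<in> act n C sI (tI k) \<and> sI (fst (abI k)) < sI (snd (abI k))"
    by (metis bchoice)
  define aI where "aI = (\<lambda>k. fst (abI k))"
  define bI where "bI = (\<lambda>k. snd (abI k))"
  have aIb: "aI k \<in> act n C sI (tI k)" "bI k \<in> act n C sI (tI k)" "sI (aI k) < sI (bI k)" if "k \<in> {1..ri}" for k
    using abI that unfolding aI_def bI_def by auto
  have "\<forall>k\<in>{1..rj}. \<exists>ab. fst ab \<in> act n C sJ (tJ k) \<and> snd ab \<in> act n C sJ (tJ k) \<and> sJ (fst ab) < sJ (snd ab)"
  proof
    fix k assume k: "k \<in> {1..rj}"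
    have "pt G v \<eta>j (tJ k) \<in> P" unfolding P_def PJ_def using k by auto
    moreover have "pt G v \<eta>j (tJ k) \<in> points G" using PJpts k unfolding PJ_def by auto
    ultimately have "divf G f (pt G v \<eta>j (tJ k)) \<noteq> 0" using bendE \<eta>jT tJe[OF k] by auto
    from bend[OF rep \<eta>jT tJe[OF k] this] show "\<exists>ab. fst ab \<in> act n C sJ (tJ k) \<and> snd ab \<in> act n C sJ (tJ k) \<and> sJ (fst ab) < sJ (snd ab)"
      unfolding C_def sJ_def by auto
  qed
  then obtain abJ where abJ: "\<forall>k\<in>{1..rj}. fst (abJ k) \<in> act n C sJ (tJ k) \<and> snd (abJ k) \<in> act n C sJ (tJ k) \<and> sJ (fst (abJ k)) < sJ (snd (abJ k))"
    by (metis bchoice)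
  define aJ where "aJ = (\<lambda>k. fst (abJ k))"
  define bJ where "bJ = (\<lambda>k. snd (abJ k))"
  have aJb: "aJ k \<in> act n C sJ (tJ k)" "bJ k \<in> act n C sJ (tJ k)" "sJ (aJ k) < sJ (bJ k)" if "k \<in> {1..rj}" for k
    using abJ that unfolding aJ_def bJ_def by auto
  obtain i0I where i0I: "i0I \<in> act n C sI 0" "slope G f v \<eta>i = sI i0I"
    using slope_v[OF rep \<eta>iT] unfolding C_def sI_def by blast
  obtain i0J where i0J: "i0J \<in> act n C sJ 0" "slope G f v \<eta>j = sJ i0J"
    using slope_v[OF rep \<eta>jT] unfolding C_def sJ_def by blast
  have lminn: "lmin n C sJ 0 = lmin n C sI 0" unfolding lmin_def by simp
  have chainI: "sI (aI l) < sI (aI k)" if "k \<in> {1..ri}" "l \<in> {1..ri}" "k < l" for k l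
    using act_chain[OF aIb(1)[OF that(1)] aIb(2)[OF that(2)] tImono[OF that(3)]] aIb(3)[OF that(2)] by linarith
  have topI: "sI (aI k) < sI i0I" if "k \<in> {1..ri}" for k
    using act_chain[OF i0I(1) aIb(2)[OF that] tIe(1)[OF that]] aIb(3)[OF that] by linarith
  have chainJ: "sJ (aJ l) < sJ (aJ k)" if "k \<in> {1..rj}" "l \<in> {1..rj}" "k < l" for k l
    using act_chain[OF aJb(1)[OF that(1)] aJb(2)[OF that(2)] tJmono[OF that(3)]] aJb(3)[OF that(2)] by linarith
  have bJ1: "sJ (aJ k) < sJ (bJ 1)" if "k \<in> {1..rj}" for k
  proof (cases "k = 1")
    case True then show ?thesis using aJb(3)[OF that] by simp
  next
    case False
    then have k1: "1 < k" using that by auto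
    have one: "1 \<in> {1..rj}" using that by auto
    have "sJ (aJ k) < sJ (aJ 1)" using chainJ[OF one that k1] .
    then show ?thesis using aJb(3)[OF one] by linarith
  qed
  have topJ: "sJ (bJ 1) \<le> sJ i0J" if "1 \<le> rj"
  proof -
    have one: "1 \<in> {1..rj}" using that by auto
    show ?thesis using act_chain[OF i0J(1) aJb(2)[OF one] tJe(1)[OF one]] .
  qed
  have absK: "\<bar>sI x\<bar> \<le> K / 2" if "x < n" for x
  proof -
    have "fs x \<in> Gs" using fsG that by auto
    then have "\<bar>sg \<eta>i (fs x)\<bar> \<le> (\<Sum>g\<in>Gs. \<bar>sg \<eta>i g\<bar>)" using Gs(1) by (intro member_le_sum) auto
    then show ?thesis unfolding sI_def K_def by simp
  qed
  have cross: "sJ (bJ 1) \<le> sJ (aI k')" if "k' \<in> {1..ri}" "1 \<le> rj" for k'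
  proof (rule ccontr)
    assume "\<not> ?thesis"
    then have lt: "sJ (aI k') < sJ (bJ 1)" by simp
    have one: "1 \<in> {1..rj}" using that by auto
    define A where "A = aI k'"
    define B where "B = bJ 1"
    have An: "A < n" using aIb(1)[OF that(1)] actn unfolding A_def by blast
    have Bn: "B < n" using aJb(2)[OF one] actn unfolding B_def by blast
    have i0In: "i0I < n" using i0I(1) actn by blast
    obtain mA :: int where mA: "sJ A = of_int mA" using gen_int[OF \<eta>jT] fsG An unfolding sJ_def by blast
    obtain mB :: int where mB: "sJ B = of_int mB" using gen_int[OF \<eta>jT] fsG Bn unfolding sJ_def by blast
    have "mA < mB" using lt mA mB unfolding A_def B_def by simp
    then have diff1: "sJ B - sJ A \<ge> 1" using mA mB by simp
    define tA where "tA = tI k'"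
    define tB where "tB = tJ 1"
    have tA: "0 < tA" "tA < \<delta>" using tI0[OF that(1)] unfolding tA_def by auto
    have tB: "\<epsilon> / 2 < tB" using tJ0[OF one] unfolding tB_def by auto
    have e1: "C A + sI A * tA \<le> C i0I + sI i0I * tA"
      using aIb(1)[OF that(1)] lmin_le[OF i0In, of C sI tA] unfolding act_def A_def tA_def by auto
    have e2: "C i0I = lmin n C sI 0" using i0I(1) unfolding act_def by auto
    have e3: "lmin n C sI 0 \<le> C B" using lmin_le[OF Bn, of C sJ 0] lminn by simp
    have e4: "C B + sJ B * tB \<le> C A + sJ A * tB"
      using aJb(2)[OF one] lmin_le[OF An, of C sJ tB] unfolding act_def B_def tB_def by auto
    have "(sI i0I - sI A) * tA \<le> K * tA"
      using absK[OF i0In] absK[OF An] tA by (intro mult_right_mono) auto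
    also have "\<dots> \<le> K * \<delta>" using K0 tA by (intro mult_left_mono) auto
    finally have f1: "C A - C i0I < \<epsilon> / 2" using e1 K\<delta> by (simp add: algebra_simps)
    have "1 * tB \<le> (sJ B - sJ A) * tB" using diff1 tB epos by (intro mult_right_mono) auto
    then have "C A - C B \<ge> tB" using e4 by (simp add: algebra_simps)
    then show False using f1 e2 e3 tB by linarith
  qed
    define hh where "hh = (\<lambda>k. SOME h. h \<in> \<Sigma> \<and> slope G h v \<eta>j = sorted_list_of_set SJ ! (k - 1))"
  have hh: "hh k \<in> \<Sigma> \<and> slope G (hh k) v \<eta>j = sorted_list_of_set SJ ! (k - 1) \<and> idx SJ (slope G (hh k) v \<eta>j) = k - 1"
    if "k \<in> {1..rj}" for k
  proof -
    have one: "1 \<le> rj" using that by auto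
    have i0Jn: "i0J < n" using i0J(1) actn by blast
    have "card ((\<lambda>k. sJ (aJ k)) ` {1..rj}) = rj"
    proof -
      have "inj_on (\<lambda>k. sJ (aJ k)) {1..rj}"
      proof (rule inj_onI)
        fix k l assume kl: "k \<in> {1..rj}" "l \<in> {1..rj}" "sJ (aJ k) = sJ (aJ l)"
        show "k = l"
        proof (rule ccontr)
          assume "k \<noteq> l"
          then have "k < l \<or> l < k" by auto
          then show False using chainJ kl by (metis less_irrefl)
        qed
      qed
      then show ?thesis by (simp add: card_image)
    qed
    moreover have "(\<lambda>k. sJ (aJ k)) ` {1..rj} \<subseteq> SJ" using sJin aJb(1) actn by blast
    moreover have "\<forall>y\<in>(\<lambda>k. sJ (aJ k)) ` {1..rj}. y < sJ i0J" using bJ1 topJ[OF one] by fastforce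
    ultimately have "rj \<le> idx SJ (sJ i0J)" using idx_ge[OF finSJ] by metis
    moreover have "idx SJ (sJ i0J) < card SJ" using nth_idx(2)[OF finSJ sJin[OF i0Jn]] .
    ultimately have kc: "k - 1 < card SJ" using that by auto
    then have "sorted_list_of_set SJ ! (k - 1) \<in> SJ" using finSJ
      by (metis length_sorted_list_of_set nth_mem set_sorted_list_of_set)
    then have "\<exists>h. h \<in> \<Sigma> \<and> slope G h v \<eta>j = sorted_list_of_set SJ ! (k - 1)"
      unfolding SJ_def slope_set_def by auto
    then have "hh k \<in> \<Sigma> \<and> slope G (hh k) v \<eta>j = sorted_list_of_set SJ ! (k - 1)"
      unfolding hh_def by (rule someI_ex)
    then show ?thesis using idx_nth[OF finSJ kc] by simp
  qed
  have zjr: "rj \<le> idx SJ (sJ (bJ 1))" if "1 \<le> rj"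
  proof -
    have "card ((\<lambda>k. sJ (aJ k)) ` {1..rj}) = rj"
    proof -
      have "inj_on (\<lambda>k. sJ (aJ k)) {1..rj}"
      proof (rule inj_onI)
        fix k l assume kl: "k \<in> {1..rj}" "l \<in> {1..rj}" "sJ (aJ k) = sJ (aJ l)"
        show "k = l"
        proof (rule ccontr)
          assume "k \<noteq> l"
          then have "k < l \<or> l < k" by auto
          then show False using chainJ kl by (metis less_irrefl)
        qed
      qed
      then show ?thesis by (simp add: card_image)
    qed
    moreover have "(\<lambda>k. sJ (aJ k)) ` {1..rj} \<subseteq> SJ" using sJin aJb(1) actn by blast
    moreover have "\<forall>y\<in>(\<lambda>k. sJ (aJ k)) ` {1..rj}. y < sJ (bJ 1)" using bJ1 by fastforce
    ultimately show "rj \<le> idx SJ (sJ (bJ 1))" using idx_ge[OF finSJ] by metis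
  qed
  define z where "z = arr eta f"
  define w where "w = (\<lambda>k. arr eta (fs (aI (ri + 1 - k))))"
  define u where "u = (\<lambda>k. arr eta (hh k))"
  have arri: "arr eta g i = idx SI (slope G g v \<eta>i)" for g
    unfolding arr_def SI_def \<eta>i_def using ij by simp
  have arrj: "arr eta g j = idx SJ (slope G g v \<eta>j)" for g
    unfolding arr_def SJ_def \<eta>j_def using ij by simp
  have wi: "w k i = idx SI (sI (aI (ri + 1 - k)))" for k unfolding w_def arri sI_def sg_def ..
  have wj: "w k j = idx SJ (sJ (aI (ri + 1 - k)))" for k unfolding w_def arrj sJ_def sg_def ..
  have zi: "z i = idx SI (sI i0I)" unfolding z_def arri i0I(2) ..
  have zj: "z j = idx SJ (sJ i0J)" unfolding z_def arrj i0J(2) ..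
  have uj: "u k j = k - 1" if "k \<in> {1..rj}" for k unfolding u_def arrj using hh[OF that] by blast
  have aIn: "aI k < n" if "k \<in> {1..ri}" for k using aIb(1)[OF that] actn by blast
  have F1: "z \<in> local_array G r \<Sigma> v eta" unfolding z_def using arr_in[OF f(1) etaT] .
  have F2: "\<forall>k\<in>{1..ri}. w k \<in> local_array G r \<Sigma> v eta"
  proof
    fix k assume k: "k \<in> {1..ri}"
    then have "ri + 1 - k \<in> {1..ri}" by auto
    then have "fs (aI (ri + 1 - k)) \<in> \<Sigma>" using aIn fsG Gs(2) by blast
    then show "w k \<in> local_array G r \<Sigma> v eta" unfolding w_def using arr_in etaT by blast
  qed
  have F3: "\<forall>k\<in>{1..rj}. u k \<in> local_array G r \<Sigma> v eta"
  proof
    fix k assume k: "k \<in> {1..rj}"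
    show "u k \<in> local_array G r \<Sigma> v eta" unfolding u_def using arr_in hh[OF k] etaT by blast
  qed
  have F4: "\<forall>k. 1 \<le> k \<and> k < ri \<longrightarrow> w k i < w (Suc k) i"
  proof (intro allI impI)
    fix k assume k: "1 \<le> k \<and> k < ri"
    have l1: "ri + 1 - k \<in> {1..ri}" and l2: "ri + 1 - Suc k \<in> {1..ri}" and l3: "ri + 1 - Suc k < ri + 1 - k"
      using k by auto
    have "sI (aI (ri + 1 - k)) < sI (aI (ri + 1 - Suc k))" using chainI[OF l2 l1 l3] .
    then show "w k i < w (Suc k) i" unfolding wi using idx_mono_less[OF finSI sIin[OF aIn[OF l1]]] by blast
  qed
  have F5: "ri \<ge> 1 \<longrightarrow> w ri i < z i"
  proof
    assume "1 \<le> ri"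
    then have l1: "ri + 1 - ri \<in> {1..ri}" by auto
    show "w ri i < z i" unfolding wi zi using idx_mono_less[OF finSI sIin[OF aIn[OF l1]] topI[OF l1]] .
  qed
  have F6: "\<forall>k. 1 \<le> k \<and> k < rj \<longrightarrow> u k j < u (Suc k) j"
  proof (intro allI impI)
    fix k assume k: "1 \<le> k \<and> k < rj"
    then have "k \<in> {1..rj}" "Suc k \<in> {1..rj}" by auto
    then show "u k j < u (Suc k) j" using uj by auto
  qed
  have F7: "rj \<ge> 1 \<longrightarrow> u rj j < z j"
  proof
    assume one: "1 \<le> rj"
    then have "rj \<in> {1..rj}" by auto
    then have "u rj j = rj - 1" using uj by auto
    moreover have "rj \<le> z j" unfolding zj using zjr[OF one] idx_mono[OF finSJ topJ[OF one]] by linarith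
    ultimately show "u rj j < z j" using one by linarith
  qed
  have F8: "\<forall>k\<in>{1..rj}. \<forall>k'\<in>{1..ri}. u k j < w k' j"
  proof (intro ballI)
    fix k k' assume k: "k \<in> {1..rj}" and k': "k' \<in> {1..ri}"
    have one: "1 \<le> rj" using k by auto
    have l1: "ri + 1 - k' \<in> {1..ri}" using k' by auto
    have "rj \<le> w k' j" unfolding wj using zjr[OF one] idx_mono[OF finSJ cross[OF l1 one]] by linarith
    moreover have "1 \<le> k" "k \<le> rj" using k by auto
    ultimately show "u k j < w k' j" using uj[OF k] by linarith
  qed
  show ?thesis by (intro exI[of _ z] exI[of _ w] exI[of _ u] conjI F1 F2 F3 F4 F5 F6 F7 F8)
qed

end


theorem mainTheorem11:
  fixes G :: "('v,'e) mgraph" and r :: nat and D :: "('v,'e) point \<Rightarrow> int"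
    and \<Sigma> :: "(('v,'e) point \<Rightarrow> real) set" and v :: "('v,'e) point"
    and eta :: "nat \<Rightarrow> 'e \<times> bool" and i j ri rj :: nat
  assumes "metric_graph G"
    and "trop_lin_series G r D \<Sigma>"
    and "v \<in> points G"
    and "valence G v \<ge> 2"
    and "bij_betw eta {..<valence G v} (tangents G v)"
    and "i < valence G v" and "j < valence G v" and "i \<noteq> j"
    and "ri + rj = r"
  shows "\<exists>z w u.
           z \<in> local_array G r \<Sigma> v eta \<and>
           (\<forall>k\<in>{1..ri}. w k \<in> local_array G r \<Sigma> v eta) \<and>
           (\<forall>k\<in>{1..rj}. u k \<in> local_array G r \<Sigma> v eta) \<and>
           (\<forall>k. 1 \<le> k \<and> k < ri \<longrightarrow> w k i < w (Suc k) i) \<and>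
           (ri \<ge> 1 \<longrightarrow> w ri i < z i) \<and>
           (\<forall>k. 1 \<le> k \<and> k < rj \<longrightarrow> u k j < u (Suc k) j) \<and>
           (rj \<ge> 1 \<longrightarrow> u rj j < z j) \<and>
           (\<forall>k\<in>{1..rj}. \<forall>k'\<in>{1..ri}. u k j < w k' j)"
proof -
  obtain Gs where Gs: "finite Gs" "Gs \<subseteq> \<Sigma>"
      "\<forall>f\<in>\<Sigma>. \<exists>n fs a. n > 0 \<and> (\<forall>i<n. fs i \<in> Gs) \<and> (\<forall>p\<in>points G. f p = trop_comb n fs a p)"
    using assms(2) unfolding trop_lin_series_def finitely_generated_def by blast
  interpret tls G r D \<Sigma> v Gs
    using assms(1,2,3) Gs by unfold_locales
  obtain \<epsilon> where \<epsilon>: "\<epsilon> > 0"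
    "\<forall>\<eta>\<in>tangents G v. \<forall>g\<in>Gs. \<forall>t. 0 \<le> t \<and> t \<le> \<epsilon> \<longrightarrow> ph G v \<eta> g t = ph G v \<eta> g 0 + sg \<eta> g * t"
    "\<forall>\<eta>\<in>tangents G v. 2 * \<epsilon> < room G v \<eta>"
    "\<forall>\<eta>\<in>tangents G v. \<forall>t. 0 < t \<and> t \<le> \<epsilon> \<longrightarrow> D (pt G v \<eta> t) = 0"
    using eps_exists by blast
  interpret tls2 G r D \<Sigma> v Gs \<epsilon>
    using \<epsilon> by unfold_locales
  show ?thesis using main[OF assms(5-9)] .
qed

end
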